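(* Let $G$ be a finite group (written additively) of odd order, and let $S\subseteq G$ be a subset such that $S\cap -S=\emptyset$ and $|S|\ge 3$. Then $|\sum(S)|\ge 2|S|$.
   Context: $-S=\{-s: s\in S\}$. For a subset $S=\{a_1,\dots,a_k\}$ of $G$, $\sum(S)$ denotes the set of all elements $a_{i_1}+\cdots+a_{i_l}$ with $1\le l\le k$ and $i_1,\dots,i_l$ pairwise distinct indices (in any order). *)

theory Defs
  imports Main
begin

definition subset_sums :: "'a::group_add set \<Rightarrow> 'a set" where
  "subset_sums S = {sum_list xs | xs. xs \<noteq> [] \<and> distinct xs \<and> set xs \<subseteq> S}"

end

theory Submission
  imports Defs
begin

lemma ss_mem: "x \<in> subset_sums S \<longleftrightarrow> (\<exists>xs. x = sum_list xs \<and> xs \<noteq> [] \<and> distinct xs \<and> set xs \<subseteq> S)"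
  unfolding subset_sums_def by blast

lemma ss_list: "xs \<noteq> [] \<Longrightarrow> distinct xs \<Longrightarrow> set xs \<subseteq> S \<Longrightarrow> sum_list xs \<in> subset_sums S"
  unfolding ss_mem by blast

lemma ss_mono: "T \<subseteq> S \<Longrightarrow> subset_sums T \<subseteq> subset_sums S"
  unfolding subset_sums_def by blast

lemma ss_app: assumes "y \<in> subset_sums (S - {a})" "a \<in> S" shows "y + a \<in> subset_sums S"
proof -
  obtain xs where xs: "y = sum_list xs" "xs \<noteq> []" "distinct xs" "set xs \<subseteq> S - {a}"
    using assms(1) unfolding ss_mem by blast
  have "sum_list (xs @ [a]) = y + a" using xs by simp
  moreover have "sum_list (xs @ [a]) \<in> subset_sums S"
    by (rule ss_list) (use xs assms(2) in auto)
  ultimately show ?thesis by simp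
qed

lemma gl1: "((a::'a::group_add) + b = a) = (b = 0)" by (metis add.right_neutral add_left_cancel)
lemma gl2: "((b::'a::group_add) + a = a) = (b = 0)" by (metis add.left_neutral add_right_cancel)
lemma gl5: "((a::'a::group_add) + (b + c) = c) = (a + b = 0)" by (metis add.assoc gl2)

lemma base_aux:
  fixes a b c :: "'a::{group_add,finite}"
  assumes S: "{a,b,c} \<subseteq> S"
    and neg: "\<And>x y. x \<in> {a,b,c} \<Longrightarrow> y \<in> {a,b,c} \<Longrightarrow> x \<noteq> - y"
    and dist: "a \<noteq> b" "b \<noteq> c" "a \<noteq> c"
    and nz: "a \<noteq> 0" "b \<noteq> 0" "c \<noteq> 0"
    and n13: "\<not> (a + b = c \<and> b + c = a)"
  shows "card (subset_sums S) \<ge> 6"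
proof -
  have "a \<noteq> - a" by (rule neg) auto
  then have na: "a + a \<noteq> 0" by (simp add: eq_neg_iff_add_eq_0)
  have "c \<noteq> - c" by (rule neg) auto
  then have nc: "c + c \<noteq> 0" by (simp add: eq_neg_iff_add_eq_0)
  have "a \<noteq> - b" by (rule neg) auto
  then have nab: "a + b \<noteq> 0" by (simp add: eq_neg_iff_add_eq_0)
  have "b \<noteq> - c" by (rule neg) auto
  then have nbc: "b + c \<noteq> 0" by (simp add: eq_neg_iff_add_eq_0)
  have "a \<noteq> - c" by (rule neg) auto
  then have nac: "a + c \<noteq> 0" by (simp add: eq_neg_iff_add_eq_0)
  let ?u = "a + b + c"
  have mem: "{a, b, c, a+b, a+c, b+c, ?u} \<subseteq> subset_sums S"
  proof -
    have "a \<in> subset_sums S" using ss_list[of "[a]" S] S by simp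
    moreover have "b \<in> subset_sums S" using ss_list[of "[b]" S] S by simp
    moreover have "c \<in> subset_sums S" using ss_list[of "[c]" S] S by simp
    moreover have "a + b \<in> subset_sums S" using ss_list[of "[a,b]" S] S dist by simp
    moreover have "a + c \<in> subset_sums S" using ss_list[of "[a,c]" S] S dist by simp
    moreover have "b + c \<in> subset_sums S" using ss_list[of "[b,c]" S] S dist by simp
    moreover have "?u \<in> subset_sums S" using ss_list[of "[a,b,c]" S] S dist by (simp add: add.assoc)
    ultimately show ?thesis by simp
  qed
  have d1: "a + b \<noteq> a" "a + b \<noteq> b" "a + c \<noteq> a" "a + c \<noteq> c" "b + c \<noteq> b" "b + c \<noteq> c"
    using nz by (simp_all add: gl1 gl2)
  have d2: "a + b \<noteq> a + c" "a + c \<noteq> b + c" using dist by simp_all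
  have d3: "?u \<noteq> a" "?u \<noteq> c" "?u \<noteq> a + b" "?u \<noteq> b + c" "?u \<noteq> a + c"
    using nz nbc nab by (simp_all add: add.assoc gl1 gl2 gl5)
  have x12: "\<not> (a + b = c \<and> a + c = b)"
  proof
    assume h: "a + b = c \<and> a + c = b"
    then have e1: "a + b = c" and e2: "a + c = b" by auto
    have "a + (a + b) = b" using e2 unfolding e1[symmetric] .
    then have "a + a = 0" by (simp only: add.assoc[symmetric] gl2)
    with na show False by simp
  qed
  have x14: "\<not> (a + b = c \<and> a + b = b + c)"
  proof
    assume h: "a + b = c \<and> a + b = b + c"
    then have e1: "a + b = c" and e2: "a + b = b + c" by auto
    have "b + c = c" using e2 unfolding e1 by simp
    with nz show False by (simp add: gl2)
  qed
  have x15: "\<not> (a + b = c \<and> ?u = b)"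
  proof
    assume h: "a + b = c \<and> ?u = b"
    then have e1: "a + b = c" and e2: "a + b + c = b" by auto
    have e3: "c + c = b" using e2 unfolding e1 .
    have "a + (c + c) = c" using e1 unfolding e3 .
    then have "a + c = 0" by (simp only: gl5)
    with nac show False by simp
  qed
  have x23: "\<not> (a + c = b \<and> b + c = a)"
  proof
    assume h: "a + c = b \<and> b + c = a"
    then have e1: "a + c = b" and e2: "b + c = a" by auto
    have "a + c + c = a" using e2 unfolding e1[symmetric] .
    then have "c + c = 0" by (simp only: add.assoc gl1)
    with nc show False by simp
  qed
  have x24: "\<not> (a + c = b \<and> a + b = b + c)"
  proof
    assume h: "a + c = b \<and> a + b = b + c"
    then have e1: "a + c = b" and e2: "a + b = b + c" by auto
    have "a + (a + c) = (a + c) + c" using e2 unfolding e1[symmetric] .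
    then have "a + c = c + c" by (simp only: add.assoc add_left_cancel)
    then have "a = c" by simp
    with dist show False by simp
  qed
  have x25: "\<not> (a + c = b \<and> ?u = b)"
  proof
    assume h: "a + c = b \<and> ?u = b"
    then have e1: "a + c = b" and e2: "a + b + c = b" by auto
    have "a + b + c = a + c" using e2 e1 by simp
    then have "a + (b + c) = a + c" by (simp only: add.assoc)
    then have "b + c = c" by (simp only: add_left_cancel)
    with nz show False by (simp add: gl2)
  qed
  have x35: "\<not> (b + c = a \<and> ?u = b)"
  proof
    assume h: "b + c = a \<and> ?u = b"
    then have e1: "b + c = a" and e2: "a + b + c = b" by auto
    have "a + (b + c) = b" using e2 by (simp only: add.assoc)
    then have e3: "a + a = b" unfolding e1 .
    have "a + a + c = a" using e1 unfolding e3[symmetric] .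
    then have "a + c = 0" by (simp only: add.assoc gl1)
    with nac show False by simp
  qed
  have x45: "\<not> (a + b = b + c \<and> ?u = b)"
  proof
    assume h: "a + b = b + c \<and> ?u = b"
    then have e1: "a + b = b + c" and e2: "a + b + c = b" by auto
    have "b + c + c = b" using e2 unfolding e1 .
    then have "c + c = 0" by (simp only: add.assoc gl1)
    with nc show False by simp
  qed
  have "\<exists>L. distinct L \<and> length L = 6 \<and> set L \<subseteq> subset_sums S"
  proof (cases "?u = b")
    case True
    have "distinct [a,b,c,a+b,a+c,b+c]"
      using True dist d1 d2 x15 x25 x35 x45 by auto
    then show ?thesis using mem by (intro exI[of _ "[a,b,c,a+b,a+c,b+c]"]) auto
  next
    case n5: False
    show ?thesis
    proof (cases "a + c = b")
      case True
      have "distinct [a,b,c,a+b,b+c,?u]"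
        using True n5 dist d1 d2 d3 x12 x23 x24 by auto
      then show ?thesis using mem by (intro exI[of _ "[a,b,c,a+b,b+c,?u]"]) auto
    next
      case n2: False
      show ?thesis
      proof (cases "a + b = c")
        case True
        have "distinct [a,b,c,a+c,b+c,?u]"
          using True n5 n2 n13 dist d1 d2 d3 by auto
        then show ?thesis using mem by (intro exI[of _ "[a,b,c,a+c,b+c,?u]"]) auto
      next
        case n1: False
        have "distinct [a,b,c,a+b,a+c,?u]"
          using n1 n5 n2 dist d1 d2 d3 by auto
        then show ?thesis using mem by (intro exI[of _ "[a,b,c,a+b,a+c,?u]"]) auto
      qed
    qed
  qed
  then obtain L where L: "distinct L" "length L = 6" "set L \<subseteq> subset_sums S" by blast
  have "card (set L) = 6" using L distinct_card by fastforce
  moreover have "card (set L) \<le> card (subset_sums S)"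
    by (rule card_mono) (use L in auto)
  ultimately show ?thesis by simp
qed

lemma diff_inj: "(y::'a::group_add) - x = y - z \<Longrightarrow> x = z"
proof -
  assume "y - x = y - z"
  then have "y + - x = y + - z" by (simp only: diff_conv_add_uminus)
  then have "- x = - z" by (rule add_left_imp_eq)
  then show "x = z" by simp
qed

lemma diff_self_iff: "((y::'a::group_add) - x = y) = (x = 0)"
proof -
  have "(y - x = y) = (y + - x = y)" by (simp only: diff_conv_add_uminus)
  also have "\<dots> = (- x = 0)" by (rule gl1)
  finally show ?thesis by simp
qed

lemma card_filter_sum: assumes "finite A" shows "card {x\<in>A. P x} = (\<Sum>x\<in>A. if P x then 1 else (0::nat))"
proof -
  have "card {x\<in>A. P x} = sum (\<lambda>x. 1) {x\<in>A. P x}" by (rule card_eq_sum)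
  also have "\<dots> = (\<Sum>x\<in>A. if P x then 1 else (0::nat))" by (rule sum.inter_filter[OF assms])
  finally show ?thesis .
qed

lemma step:
  fixes S :: "'a::{group_add,finite} set"
  assumes disj: "S \<inter> uminus ` S = {}" and K: "card S = K" "K \<ge> 2"
    and IH: "\<And>a. a \<in> S \<Longrightarrow> card (subset_sums (S - {a})) \<ge> 2*K - 2"
  shows "card (subset_sums S) \<ge> 2*K"
proof (rule ccontr)
  assume contra: "\<not> card (subset_sums S) \<ge> 2*K"
  define Y where "Y = subset_sums S"
  define D where "D = S \<union> uminus ` S"
  have cardD: "card D = 2*K"
  proof -
    have "card (uminus ` S) = card S" by (rule card_image) (simp add: inj_on_def)
    then show ?thesis unfolding D_def using disj K by (simp add: card_Un_disjoint)
  qed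
  have z: "0 \<notin> D"
  proof
    assume "0 \<in> D"
    then have "0 \<in> S" unfolding D_def by force
    then have "0 \<in> S \<inter> uminus ` S" by force
    with disj show False by simp
  qed
  have lower: "2*K - 2 \<le> card {y\<in>Y. y - x \<in> Y}" if x: "x \<in> D" for x
  proof (cases "x \<in> S")
    case True
    have sub: "(\<lambda>z. z + x) ` subset_sums (S - {x}) \<subseteq> {y\<in>Y. y - x \<in> Y}"
    proof
      fix w assume "w \<in> (\<lambda>z. z + x) ` subset_sums (S - {x})"
      then obtain z where zz: "z \<in> subset_sums (S - {x})" "w = z + x" by blast
      have "w \<in> Y" unfolding Y_def using ss_app[OF zz(1) True] zz(2) by simp
      moreover have "w - x \<in> Y" using zz ss_mono[of "S - {x}" S] unfolding Y_def by auto
      ultimately show "w \<in> {y\<in>Y. y - x \<in> Y}" by simp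
    qed
    have "card ((\<lambda>z. z + x) ` subset_sums (S - {x})) = card (subset_sums (S - {x}))"
      by (rule card_image) (simp add: inj_on_def)
    moreover have "card ((\<lambda>z. z + x) ` subset_sums (S - {x})) \<le> card {y\<in>Y. y - x \<in> Y}"
      by (rule card_mono[OF _ sub]) simp
    ultimately show ?thesis using IH[OF True] by simp
  next
    case False
    then obtain a where a: "a \<in> S" "x = - a" using x unfolding D_def by blast
    have sub: "subset_sums (S - {a}) \<subseteq> {y\<in>Y. y - x \<in> Y}"
    proof
      fix w assume w: "w \<in> subset_sums (S - {a})"
      have "w \<in> Y" using w ss_mono[of "S - {a}" S] unfolding Y_def by auto
      moreover have "w - x \<in> Y" using ss_app[OF w a(1)] a(2) unfolding Y_def by simp
      ultimately show "w \<in> {y\<in>Y. y - x \<in> Y}" by simp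
    qed
    have "card (subset_sums (S - {a})) \<le> card {y\<in>Y. y - x \<in> Y}"
      by (rule card_mono[OF _ sub]) simp
    then show ?thesis using IH[OF a(1)] by simp
  qed
  have "card D * (2*K - 2) \<le> (\<Sum>x\<in>D. card {y\<in>Y. y - x \<in> Y})"
    using sum_bounded_below[of D "2*K - 2" "\<lambda>x. card {y\<in>Y. y - x \<in> Y}"] lower by simp
  also have "\<dots> = (\<Sum>x\<in>D. \<Sum>y\<in>Y. if y - x \<in> Y then 1 else (0::nat))"
    by (simp add: card_filter_sum)
  also have "\<dots> = (\<Sum>y\<in>Y. \<Sum>x\<in>D. if y - x \<in> Y then 1 else (0::nat))"
    by (rule sum.swap)
  also have "\<dots> = (\<Sum>y\<in>Y. card {x\<in>D. y - x \<in> Y})"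
    by (simp add: card_filter_sum)
  also have "\<dots> \<le> (\<Sum>y\<in>Y. card Y - 1)"
  proof (rule sum_mono)
    fix y assume y: "y \<in> Y"
    have "card {x\<in>D. y - x \<in> Y} \<le> card (Y - {y})"
    proof (rule card_inj_on_le[where f = "\<lambda>x. y - x"])
      show "inj_on (\<lambda>x. y - x) {x\<in>D. y - x \<in> Y}" by (auto simp: inj_on_def dest: diff_inj)
      show "(\<lambda>x. y - x) ` {x\<in>D. y - x \<in> Y} \<subseteq> Y - {y}" using z by (auto simp: diff_self_iff)
    qed simp
    then show "card {x\<in>D. y - x \<in> Y} \<le> card Y - 1" using y by simp
  qed
  also have "\<dots> = card Y * (card Y - 1)" by simp
  finally have ineq: "2*K * (2*K - 2) \<le> card Y * (card Y - 1)" using cardD by simp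
  have cY: "card Y \<le> 2*K - 1" using contra unfolding Y_def by simp
  have h2: "card Y * (card Y - 1) \<le> (2*K - 1) * (2*K - 2)"
    using cY by (intro mult_le_mono) auto
  have h3: "(2*K - 1) * (2*K - 2) < 2*K * (2*K - 2)" using K(2) by (intro mult_less_mono1) auto
  from ineq h2 h3 show False by linarith
qed

lemma base3:
  fixes S :: "'a::{group_add,finite} set"
  assumes disj: "S \<inter> uminus ` S = {}" and c3: "card S = 3"
  shows "card (subset_sums S) \<ge> 6"
proof -
  obtain a b c where abc: "S = {a,b,c}" "a \<noteq> b" "b \<noteq> c" "a \<noteq> c"
    using c3 card_3_iff by metis
  have neg: "\<And>x y. x \<in> S \<Longrightarrow> y \<in> S \<Longrightarrow> x \<noteq> - y"
  proof
    fix x y assume "x \<in> S" "y \<in> S" "x = - y"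
    then have "x \<in> S \<inter> uminus ` S" by blast
    with disj show False by simp
  qed
  have nz: "a \<noteq> 0" "b \<noteq> 0" "c \<noteq> 0"
    using neg[of a a] neg[of b b] neg[of c c] abc(1) by auto
  show ?thesis
  proof (cases "a + b = c \<and> b + c = a")
    case False
    show ?thesis
      by (rule base_aux[of a b c]) (use abc nz neg False in auto)
  next
    case True
    have cc: "c + c \<noteq> 0" using neg[of c c] abc(1) by (auto simp: eq_neg_iff_add_eq_0)
    have "\<not> (b + a = c \<and> a + c = b)"
    proof
      assume h: "b + a = c \<and> a + c = b"
      then have "b + c + c = b" using True by simp
      then have "c + c = 0" by (metis add.assoc add.right_neutral add_left_cancel)
      with cc show False by simp
    qed
    then show ?thesis
      by (intro base_aux[of b a c]) (use abc nz neg in auto)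
  qed
qed

lemma main_ind:
  fixes S :: "('a::{group_add, finite}) set"
  shows "card S = n \<Longrightarrow> 3 \<le> n \<Longrightarrow> S \<inter> uminus ` S = {} \<Longrightarrow> 2 * n \<le> card (subset_sums S)"
proof (induction n arbitrary: S)
  case 0
  then show ?case by simp
next
  case (Suc n)
  show ?case
  proof (cases "n = 2")
    case True
    then show ?thesis using base3[of S] Suc.prems by simp
  next
    case False
    then have n3: "3 \<le> n" using Suc.prems(2) by simp
    show ?thesis
    proof (rule step[of S "Suc n"])
      show "S \<inter> uminus ` S = {}" by (rule Suc.prems(3))
      show "card S = Suc n" by (rule Suc.prems(1))
      show "2 \<le> Suc n" using n3 by simp
      fix a assume a: "a \<in> S"
      have "card (S - {a}) = n" using Suc.prems(1) a by simp
      moreover have "(S - {a}) \<inter> uminus ` (S - {a}) = {}" using Suc.prems(3) by blast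
      ultimately have "2 * n \<le> card (subset_sums (S - {a}))" using Suc.IH n3 by blast
      then show "2 * Suc n - 2 \<le> card (subset_sums (S - {a}))" by simp
    qed
  qed
qed

theorem lemma2p4:
  fixes S :: "('a::{group_add, finite}) set"
  assumes "odd (card (UNIV :: 'a set))"
    and "S \<inter> uminus ` S = {}"
    and "card S \<ge> 3"
  shows "card (subset_sums S) \<ge> 2 * card S"
  using main_ind[of S "card S"] assms by simp

end
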